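(* Let $C$ be the middle-thirds Cantor set and for $n\in\mathbb{N}$ let $S_n:=\{p/q\in C:\gcd(p,q)=1,\ 3^{n-1}\le q<3^n\}$ and, for $K<\infty$, $S_n^{(K)}:=\{p/q\in S_n: P(p/q)\le K\log q\}$. Suppose there exists $K<\infty$ such that for every $\varepsilon_1>0$, $\#(S_n\setminus S_n^{(K)})=O(2^{n(1+\varepsilon_1)})$. Then for every $\varepsilon_1>0$, $\#(S_n)=O(2^{n(1+\varepsilon_1)})$.
   Context: $C=\{x\in[0,1]: x=\sum_{i\ge1}a_i3^{-i}\text{ with all }a_i\in\{0,2\}\}$. For a rational number $p/q$, its period $P(p/q)$ is the (minimal) period of the eventually periodic part of its ternary expansion. $\log$ is the natural logarithm. *)

theory Defs
  imports "HOL-Analysis.Analysis" "HOL-Library.Landau_Symbols"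
begin

definition cantor_set :: "real set" where
  "cantor_set = {x. 0 \<le> x \<and> x \<le> 1 \<and>
     (\<exists>a :: nat \<Rightarrow> nat. (\<forall>i. a i \<in> {0, 2}) \<and> (\<lambda>i. real (a i) / 3 ^ Suc i) sums x)}"

text \<open>The i-th ternary digit (i >= 1) of x, greedy (terminating) expansion.\<close>
definition tdigit :: "real \<Rightarrow> nat \<Rightarrow> int" where
  "tdigit x i = \<lfloor>3 ^ i * x\<rfloor> mod 3"

definition tperiod :: "real \<Rightarrow> nat" where
  "tperiod x = (LEAST k. k > 0 \<and> (\<exists>N. \<forall>i\<ge>N. tdigit x (i + k) = tdigit x i))"

definition S :: "nat \<Rightarrow> (nat \<times> nat) set" where
  "S n = {(p, q). coprime p q \<and> real p / real q \<in> cantor_set \<and> 3 ^ (n - 1) \<le> q \<and> q < 3 ^ n}"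

definition SK :: "real \<Rightarrow> nat \<Rightarrow> (nat \<times> nat) set" where
  "SK K n = {(p, q) \<in> S n. real (tperiod (real p / real q)) \<le> K * ln (real q)}"

end

theory Submission
  imports Defs "HOL-Computational_Algebra.Primes"
begin

lemma divisors_primepow_mult:
  fixes p M a :: nat
  assumes p: "prime p" and M: "M > 0" and nd: "\<not> p dvd M"
  shows "card {d. d dvd p ^ a * M} \<le> (Suc a) * card {d. d dvd M}"
proof -
  have sub: "{d. d dvd p ^ a * M} \<subseteq> (\<lambda>(i,e). p ^ i * e) ` ({..a} \<times> {d. d dvd M})"
  proof
    fix d assume "d \<in> {d. d dvd p ^ a * M}"
    hence d: "d dvd p ^ a * M" by simp
    have "d \<noteq> 0"
    proof
      assume "d = 0"
      with d have "p ^ a * M = 0" by simp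
      thus False using M p by (simp add: prime_gt_0_nat)
    qed
    moreover have "\<not> is_unit p" using p by (metis not_prime_unit)
    ultimately obtain e where de0: "d = p ^ multiplicity p d * e" and ne: "\<not> p dvd e"
      using multiplicity_decompose'[of d p] by blast
    define m where "m = multiplicity p d"
    have de: "d = p ^ m * e" using de0 unfolding m_def .
    have "coprime e p" using prime_imp_coprime[OF p ne] by (simp add: coprime_commute)
    hence cop: "coprime e (p ^ a)" by simp
    have "e dvd d" unfolding de by (rule dvd_triv_right)
    hence "e dvd p ^ a * M" using d by (rule dvd_trans)
    hence eM: "e dvd M" using cop by (simp add: coprime_dvd_mult_right_iff)
    have "coprime p M" using prime_imp_coprime[OF p nd] .
    hence cop2: "coprime (p ^ m) M" by simp
    have "p ^ m dvd d" unfolding de by (rule dvd_triv_left)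
    hence "p ^ m dvd p ^ a * M" using d by (rule dvd_trans)
    hence "p ^ m dvd p ^ a" using cop2 by (simp add: coprime_dvd_mult_left_iff)
    moreover have "1 < p" using prime_gt_1_nat[OF p] .
    ultimately have ma: "m \<le> a" by (rule power_dvd_imp_le)
    have "(m, e) \<in> {..a} \<times> {d. d dvd M}" using ma eM by simp
    moreover have "d = (\<lambda>(i,e). p ^ i * e) (m, e)" using de by simp
    ultimately show "d \<in> (\<lambda>(i,e). p ^ i * e) ` ({..a} \<times> {d. d dvd M})"
      by (rule rev_image_eqI)
  qed
  have fin: "finite ({..a} \<times> {d. d dvd M})" using M by simp
  have "card {d. d dvd p ^ a * M} \<le> card ((\<lambda>(i,e). p ^ i * e) ` ({..a} \<times> {d. d dvd M}))"
    by (rule card_mono[OF finite_imageI[OF fin] sub])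
  also have "\<dots> \<le> card ({..a} \<times> {d. d dvd M})" by (rule card_image_le[OF fin])
  also have "\<dots> = Suc a * card {d. d dvd M}" by (simp add: card_cartesian_product)
  finally show ?thesis .
qed

lemma suc_le_pow_bound:
  fixes \<delta> :: real assumes "\<delta> > 0"
  shows "real (Suc a) \<le> max 1 (1 / (\<delta> * ln 2)) * 2 powr (real a * \<delta>)"
proof -
  have e: "2 powr (real a * \<delta>) \<ge> 1 + real a * \<delta> * ln 2"
  proof -
    have "2 powr (real a * \<delta>) = exp (real a * \<delta> * ln 2)" by (simp add: powr_def mult.commute)
    also have "\<dots> \<ge> 1 + real a * \<delta> * ln 2" by (rule exp_ge_add_one_self)
    finally show ?thesis .
  qed
  have l2: "ln (2::real) > 0" by simp
  show ?thesis
  proof (cases "\<delta> * ln 2 \<ge> 1")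
    case True
    have "real a \<le> real a * (\<delta> * ln 2)" using True by (simp add: mult_le_cancel_left1)
    hence "real (Suc a) \<le> 2 powr (real a * \<delta>)" using e by (simp add: algebra_simps)
    also have "\<dots> \<le> max 1 (1 / (\<delta> * ln 2)) * 2 powr (real a * \<delta>)"
      by (simp add: mult_le_cancel_right1)
    finally show ?thesis .
  next
    case False
    have pos: "\<delta> * ln 2 > 0" using assms l2 by simp
    have "real (Suc a) \<le> (1 / (\<delta> * ln 2)) * (1 + real a * \<delta> * ln 2)"
      using False pos by (simp add: field_simps)
    also have "\<dots> \<le> (1 / (\<delta> * ln 2)) * 2 powr (real a * \<delta>)"
      using e pos by (intro mult_left_mono) auto
    also have "\<dots> \<le> max 1 (1 / (\<delta> * ln 2)) * 2 powr (real a * \<delta>)"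
      by (intro mult_right_mono) auto
    finally show ?thesis .
  qed
qed

lemma divisor_bound:
  fixes \<delta> :: real assumes dp: "\<delta> > 0"
  shows "\<exists>C>0. \<forall>N>0. real (card {d. d dvd N}) \<le> C * real N powr \<delta>"
proof -
  define c where "c = max 1 (1 / (\<delta> * ln 2))"
  define B where "B = (2::real) powr (1 / \<delta>)"
  have c1: "c \<ge> 1" by (simp add: c_def)
  define s where "s N = {p. prime p \<and> p dvd N \<and> real p < B}" for N :: nat
  have main: "real (card {d. d dvd N}) \<le> real N powr \<delta> * c ^ card (s N)" if "N > 0" for N
    using that
  proof (induction N rule: less_induct)
    case (less N)
    show ?case
    proof (cases "N = 1")
      case True
      then have "s N = {}" by (auto simp: s_def)
      then show ?thesis using \<open>N = 1\<close> by simp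
    next
      case False
      with less.prems have N1: "N > 1" by simp
      obtain p where p: "prime p" "p dvd N" using N1 prime_factor_nat[of N] by auto
      define a where "a = multiplicity p N"
      obtain M where NM: "N = p ^ a * M" and nd: "\<not> p dvd M"
      proof -
        have "N \<noteq> 0" "\<not> is_unit p" using less.prems p(1) by (auto simp: not_prime_unit)
        thus ?thesis using multiplicity_decompose'[of N p] that unfolding a_def by blast
      qed
      have a1: "a \<ge> 1"
      proof -
        have "N \<noteq> 0" "\<not> is_unit p" using less.prems p(1) by (auto simp: not_prime_unit)
        thus ?thesis using multiplicity_gt_zero_iff[of N p] p(2) unfolding a_def by simp
      qed
      have M0: "M > 0"
      proof (rule ccontr)
        assume "\<not> M > 0"
        hence "M = 0" by simp
        hence "N = 0" using NM by simp
        thus False using less.prems by simp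
      qed
      have p2: "p \<ge> 2" using p by (simp add: prime_ge_2_nat)
      have "p ^ 1 \<le> p ^ a" using p2 a1 by (intro power_increasing) auto
      hence "p ^ a \<ge> 2" using p2 by simp
      hence "2 * M \<le> p ^ a * M" by (rule mult_right_mono) simp
      hence MN: "M < N" using M0 NM by linarith
      have IH: "real (card {d. d dvd M}) \<le> real M powr \<delta> * c ^ card (s M)"
        using less.IH[OF MN M0] .
      have DN: "real (card {d. d dvd N}) \<le> real (Suc a) * real (card {d. d dvd M})"
      proof -
        have "card {d. d dvd N} \<le> Suc a * card {d. d dvd M}"
          unfolding NM by (rule divisors_primepow_mult[OF p(1) M0 nd])
        hence "real (card {d. d dvd N}) \<le> real (Suc a * card {d. d dvd M})" by (simp only: of_nat_le_iff)
        also have "real (Suc a * card {d. d dvd M}) = real (Suc a) * real (card {d. d dvd M})"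
          by (rule of_nat_mult)
        finally show ?thesis .
      qed
      have pow: "real N powr \<delta> = real p powr (real a * \<delta>) * real M powr \<delta>"
      proof -
        have "real N powr \<delta> = (real p ^ a) powr \<delta> * real M powr \<delta>"
          using NM by (simp add: powr_mult)
        moreover have "(real p ^ a) powr \<delta> = real p powr (real a * \<delta>)"
        proof -
          have "real p ^ a = real p powr real a" using p2 by (simp add: powr_realpow)
          thus ?thesis by (simp add: powr_powr)
        qed
        ultimately show ?thesis by simp
      qed
      have finN: "finite (s N)"
      proof (rule finite_subset[of _ "{..N}"])
        show "s N \<subseteq> {..N}" using less.prems by (auto simp: s_def dest: dvd_imp_le)
      qed simp
      have sMN: "s M \<subseteq> s N" unfolding s_def NM by auto
      show ?thesis
      proof (cases "real p < B")
        case True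
        have pin: "p \<in> s N" "p \<notin> s M" using True p nd unfolding s_def by auto
        have "card (s M) + 1 \<le> card (s N)"
        proof -
          have "insert p (s M) \<subseteq> s N" using pin sMN by auto
          hence "card (insert p (s M)) \<le> card (s N)" using finN by (rule card_mono[rotated])
          moreover have "finite (s M)" using finN sMN finite_subset by blast
          ultimately show ?thesis using pin by simp
        qed
        hence "c ^ (card (s M) + 1) \<le> c ^ card (s N)" using c1 by (rule power_increasing)
        hence cc: "c * c ^ card (s M) \<le> c ^ card (s N)" by simp
        have "real (Suc a) \<le> c * 2 powr (real a * \<delta>)"
          using suc_le_pow_bound[OF dp, of a] by (simp add: c_def)
        also have "\<dots> \<le> c * real p powr (real a * \<delta>)"
          using p2 c1 dp by (intro mult_left_mono powr_mono2) auto
        finally have sa: "real (Suc a) \<le> c * real p powr (real a * \<delta>)" .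
        have "real (card {d. d dvd N}) \<le> real (Suc a) * (real M powr \<delta> * c ^ card (s M))"
          using DN by (rule order_trans) (rule mult_left_mono[OF IH], simp)
        also have "\<dots> \<le> c * real p powr (real a * \<delta>) * (real M powr \<delta> * c ^ card (s M))"
          using sa c1 by (intro mult_right_mono) auto
        also have "\<dots> = real N powr \<delta> * (c * c ^ card (s M))" using pow by simp
        also have "\<dots> \<le> real N powr \<delta> * c ^ card (s N)"
          using cc by (intro mult_left_mono) auto
        finally show ?thesis .
      next
        case False
        have "real p powr \<delta> \<ge> B powr \<delta>" using False dp B_def by (intro powr_mono2) auto
        moreover have "B powr \<delta> = 2" using dp by (simp add: B_def powr_powr)
        ultimately have pd: "real p powr \<delta> \<ge> 2" by simp
        have "real (Suc a) \<le> 2 ^ a"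
        proof -
          have "Suc a \<le> 2 ^ a" by (rule Suc_leI[OF less_exp])
          hence "real (Suc a) \<le> real (2 ^ a)" by (simp only: of_nat_le_iff)
          also have "real (2 ^ a) = (2::real) ^ a" by simp
          finally show ?thesis .
        qed
        also have "\<dots> \<le> (real p powr \<delta>) ^ a" by (rule power_mono[OF pd]) simp
        also have "\<dots> = real p powr (real a * \<delta>)"
        proof -
          have "(real p powr \<delta>) powr real a = (real p powr \<delta>) ^ a"
            by (rule powr_realpow) (use p2 in simp)
          moreover have "(real p powr \<delta>) powr real a = real p powr (real a * \<delta>)"
            by (simp add: powr_powr mult.commute)
          ultimately show ?thesis by simp
        qed
        finally have sa: "real (Suc a) \<le> real p powr (real a * \<delta>)" .
        have cc: "c ^ card (s M) \<le> c ^ card (s N)"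
          using c1 card_mono[OF finN sMN] by (simp add: power_increasing)
        have "real (card {d. d dvd N}) \<le> real (Suc a) * (real M powr \<delta> * c ^ card (s M))"
          using DN by (rule order_trans) (rule mult_left_mono[OF IH], simp)
        also have "\<dots> \<le> real p powr (real a * \<delta>) * (real M powr \<delta> * c ^ card (s M))"
          using sa c1 by (intro mult_right_mono) auto
        also have "\<dots> = real N powr \<delta> * c ^ card (s M)" using pow by simp
        also have "\<dots> \<le> real N powr \<delta> * c ^ card (s N)"
          using cc by (intro mult_left_mono) auto
        finally show ?thesis .
      qed
    qed
  qed
  define k where "k = nat \<lceil>B\<rceil>"
  have sk: "card (s N) \<le> k" for N
  proof -
    have "s N \<subseteq> {..<k}"
    proof
      fix p assume "p \<in> s N"
      hence "real p < B" by (simp add: s_def)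
      also have "B \<le> real_of_int \<lceil>B\<rceil>" by (rule le_of_int_ceiling)
      finally have "int p < \<lceil>B\<rceil>" by linarith
      thus "p \<in> {..<k}" unfolding k_def by simp
    qed
    thus ?thesis by (metis card_lessThan card_mono finite_lessThan)
  qed
  show ?thesis
  proof (intro exI[of _ "c ^ k"] conjI allI impI)
    show "c ^ k > 0" using c1 by simp
    fix N :: nat assume "N > 0"
    have "real (card {d. d dvd N}) \<le> real N powr \<delta> * c ^ card (s N)" using main[OF \<open>N>0\<close>] .
    also have "\<dots> \<le> real N powr \<delta> * c ^ k" using c1 sk[of N] by (intro mult_left_mono power_increasing) auto
    finally show "real (card {d. d dvd N}) \<le> c ^ k * real N powr \<delta>" by (simp add: mult.commute)
  qed
qed


lemma floor_three_frac:
  fixes y :: real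
  shows "\<lfloor>3 * y\<rfloor> = 3 * \<lfloor>y\<rfloor> + \<lfloor>3 * frac y\<rfloor>"
proof -
  have "3 * y = of_int (3 * \<lfloor>y\<rfloor>) + 3 * frac y" by (simp add: frac_def algebra_simps)
  hence "\<lfloor>3 * y\<rfloor> = \<lfloor>of_int (3 * \<lfloor>y\<rfloor>) + 3 * frac y\<rfloor>" by simp
  also have "\<dots> = \<lfloor>3 * frac y + of_int (3 * \<lfloor>y\<rfloor>)\<rfloor>" by (simp only: add.commute)
  also have "\<dots> = \<lfloor>3 * frac y\<rfloor> + 3 * \<lfloor>y\<rfloor>" by (rule floor_add_int[symmetric])
  also have "\<dots> = 3 * \<lfloor>y\<rfloor> + \<lfloor>3 * frac y\<rfloor>" by (rule add.commute)
  finally show ?thesis .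
qed

lemma floor_three_frac_range:
  fixes y :: real
  shows "0 \<le> \<lfloor>3 * frac y\<rfloor>" "\<lfloor>3 * frac y\<rfloor> < 3"
proof -
  have "0 \<le> frac y" "frac y < 1" by (auto simp: frac_lt_1)
  thus "0 \<le> \<lfloor>3 * frac y\<rfloor>" "\<lfloor>3 * frac y\<rfloor> < 3" by linarith+
qed

lemma tdigit_Suc:
  "tdigit x (Suc k) = \<lfloor>3 * frac (3 ^ k * x)\<rfloor>"
proof -
  have "tdigit x (Suc k) = \<lfloor>3 * (3 ^ k * x)\<rfloor> mod 3" by (simp add: tdigit_def mult.assoc)
  also have "\<dots> = (3 * \<lfloor>3 ^ k * x\<rfloor> + \<lfloor>3 * frac (3 ^ k * x)\<rfloor>) mod 3"
    by (simp only: floor_three_frac[of "3 ^ k * x"])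
  also have "\<dots> = \<lfloor>3 * frac (3 ^ k * x)\<rfloor> mod 3" by simp
  also have "\<dots> = \<lfloor>3 * frac (3 ^ k * x)\<rfloor>"
    using floor_three_frac_range[of "3 ^ k * x"] by simp
  finally show ?thesis .
qed

lemma frac_Suc:
  "frac (3 ^ Suc k * x) = 3 * frac (3 ^ k * x) - of_int (tdigit x (Suc k))"
proof -
  have "frac (3 ^ Suc k * x) = 3 * (3 ^ k * x) - of_int \<lfloor>3 * (3 ^ k * x)\<rfloor>"
    by (simp add: frac_def mult.assoc)
  also have "\<dots> = 3 * frac (3 ^ k * x) - of_int (\<lfloor>3 * frac (3 ^ k * x)\<rfloor>)"
    by (simp only: floor_three_frac[of "3 ^ k * x"]) (simp add: frac_def algebra_simps)
  finally show ?thesis by (simp only: tdigit_Suc)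
qed

lemma periodic_frac_eq:
  assumes per: "\<forall>i\<ge>N. tdigit x (i + P) = tdigit x i"
  shows "frac (3 ^ N * x) = frac (3 ^ (N + P) * x)"
proof -
  define \<Delta> where "\<Delta> = frac (3 ^ N * x) - frac (3 ^ (N + P) * x)"
  have step: "frac (3 ^ (N + j) * x) - frac (3 ^ (N + P + j) * x) = 3 ^ j * \<Delta>" for j
  proof (induction j)
    case 0 show ?case by (simp add: \<Delta>_def)
  next
    case (Suc j)
    have e: "tdigit x (Suc (N + P + j)) = tdigit x (Suc (N + j))"
      using per[rule_format, of "Suc (N + j)"] by (simp add: add_ac)
    have "frac (3 ^ (N + Suc j) * x) - frac (3 ^ (N + P + Suc j) * x)
        = frac (3 ^ Suc (N + j) * x) - frac (3 ^ Suc (N + P + j) * x)" by simp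
    also have "\<dots> = 3 * (frac (3 ^ (N + j) * x) - frac (3 ^ (N + P + j) * x))"
      by (simp only: frac_Suc e) (simp add: algebra_simps)
    also have "\<dots> = 3 ^ Suc j * \<Delta>" using Suc.IH by simp
    finally show ?case .
  qed
  have bnd: "\<bar>3 ^ j * \<Delta>\<bar> < 1" for j
  proof -
    have "0 \<le> frac (3 ^ (N + j) * x)" "frac (3 ^ (N + j) * x) < 1"
      "0 \<le> frac (3 ^ (N + P + j) * x)" "frac (3 ^ (N + P + j) * x) < 1"
      by (auto simp: frac_lt_1)
    thus ?thesis using step[of j] by linarith
  qed
  have "\<Delta> = 0"
  proof (rule ccontr)
    assume "\<Delta> \<noteq> 0"
    hence pos: "\<bar>\<Delta>\<bar> > 0" by simp
    obtain j :: nat where "1 / \<bar>\<Delta>\<bar> < 3 ^ j" using real_arch_pow[of 3 "1 / \<bar>\<Delta>\<bar>"] by auto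
    hence "1 < 3 ^ j * \<bar>\<Delta>\<bar>" using pos by (simp add: field_simps)
    moreover have "\<bar>3 ^ j * \<Delta>\<bar> = 3 ^ j * \<bar>\<Delta>\<bar>" by (simp add: abs_mult)
    ultimately show False using bnd[of j] by linarith
  qed
  thus ?thesis by (simp add: \<Delta>_def)
qed


lemma frac_eq_denom_dvd:
  fixes p q N P :: nat
  assumes q: "q > 0" and cop: "coprime p q"
    and eq: "frac (3 ^ N * (real p / real q)) = frac (3 ^ (N + P) * (real p / real q))"
  shows "q dvd 3 ^ N * (3 ^ P - 1)"
proof -
  define x where "x = real p / real q"
  define z where "z = \<lfloor>3 ^ (N + P) * x\<rfloor> - \<lfloor>3 ^ N * x\<rfloor>"
  have "3 ^ (N + P) * x - 3 ^ N * x = of_int z"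
    using eq unfolding z_def x_def frac_def by simp
  hence "real (3 ^ N * (3 ^ P - 1)) * x = of_int z"
    by (simp add: of_nat_diff power_add algebra_simps)
  hence "real (3 ^ N * (3 ^ P - 1) * p) = of_int z * real q"
    using q unfolding x_def by (simp add: field_simps)
  hence "int (3 ^ N * (3 ^ P - 1) * p) = z * int q"
    by (metis of_int_eq_iff of_int_of_nat_eq of_int_mult)
  hence "int q dvd int (3 ^ N * (3 ^ P - 1) * p)" by simp
  hence "q dvd 3 ^ N * (3 ^ P - 1) * p" by (simp only: of_nat_dvd_iff)
  thus ?thesis using cop by (simp add: coprime_commute coprime_dvd_mult_left_iff)
qed

lemma tdigit_eventually_periodic:
  fixes p q :: nat
  assumes q: "q > 0"
  shows "\<exists>k>0. \<exists>N. \<forall>i\<ge>N. tdigit (real p / real q) (i + k) = tdigit (real p / real q) i"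
proof -
  define x where "x = real p / real q"
  define f where "f k = frac (3 ^ k * x)" for k
  define g where "g k = \<lfloor>real q * f k\<rfloor>" for k
  have qf: "real q * f k = of_int (g k)" for k
  proof -
    have "real q * f k = real q * (3 ^ k * x) - real q * of_int \<lfloor>3 ^ k * x\<rfloor>"
      by (simp add: f_def frac_def algebra_simps)
    also have "\<dots> = of_int (int (3 ^ k * p) - int q * \<lfloor>3 ^ k * x\<rfloor>)"
      using q by (simp add: x_def)
    finally have "real q * f k = of_int (int (3 ^ k * p) - int q * \<lfloor>3 ^ k * x\<rfloor>)" .
    thus ?thesis unfolding g_def by (metis floor_of_int)
  qed
  have grange: "g k \<in> {0..<int q}" for k
  proof -
    have "0 \<le> f k" "f k < 1" by (auto simp: f_def frac_lt_1)
    hence "0 \<le> real q * f k" "real q * f k < real q" using q by auto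
    hence "0 \<le> real_of_int (g k)" "real_of_int (g k) < real q" using qf[of k] by auto
    thus ?thesis by simp
  qed
  have "\<not> inj_on g {0..q}"
  proof
    assume "inj_on g {0..q}"
    hence "card (g ` {0..q}) = card {0..q}" by (rule card_image)
    moreover have "card (g ` {0..q}) \<le> card {0..<int q}"
      using grange by (intro card_mono) auto
    ultimately show False by simp
  qed
  then obtain a b where ab: "a \<in> {0..q}" "b \<in> {0..q}" "a \<noteq> b" "g a = g b"
    unfolding inj_on_def by blast
  have "\<exists>a b. a < b \<and> f a = f b"
  proof -
    have "f a = f b" using qf[of a] qf[of b] ab(4) q by (metis mult_cancel_left of_nat_0_less_iff less_irrefl)
    thus ?thesis using ab(3) by (metis linorder_neqE_nat)
  qed
  then obtain a b where ab2: "a < b" "f a = f b" by blast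
  have fs: "f (Suc k) = frac (3 * f k)" for k
  proof -
    have "f (Suc k) = 3 * f k - of_int (tdigit x (Suc k))" unfolding f_def by (rule frac_Suc)
    also have "\<dots> = 3 * f k - of_int \<lfloor>3 * f k\<rfloor>" by (simp add: tdigit_Suc f_def)
    finally show ?thesis by (simp add: frac_def)
  qed
  have fj: "f (a + j) = f (b + j)" for j
    by (induction j) (simp_all add: ab2(2) fs)
  show ?thesis
  proof (rule exI[of _ "b - a"], intro conjI)
    show "b - a > 0" using ab2 by simp
    show "\<exists>N. \<forall>i\<ge>N. tdigit (real p / real q) (i + (b - a)) = tdigit (real p / real q) i"
    proof (rule exI[of _ "Suc a"], intro allI impI)
    fix i assume "Suc a \<le> i"
    then obtain j where i: "i = Suc (a + j)" by (metis add_Suc le_iff_add)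
    have "i + (b - a) = Suc (b + j)" using i ab2 by simp
    hence "tdigit x (i + (b - a)) = \<lfloor>3 * f (b + j)\<rfloor>" by (simp add: tdigit_Suc f_def)
    also have "\<dots> = \<lfloor>3 * f (a + j)\<rfloor>" by (simp add: fj)
    also have "\<dots> = tdigit x i" using i by (simp add: tdigit_Suc f_def)
    finally show "tdigit (real p / real q) (i + (b - a)) = tdigit (real p / real q) i"
      unfolding x_def .
    qed
  qed
qed

lemma tperiod_props:
  fixes p q :: nat
  assumes q: "q > 0"
  shows "tperiod (real p / real q) > 0 \<and> (\<exists>N. \<forall>i\<ge>N. tdigit (real p / real q) (i + tperiod (real p / real q)) = tdigit (real p / real q) i)"
  unfolding tperiod_def
  by (rule LeastI_ex) (use tdigit_eventually_periodic[OF q, of p] in blast)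

lemma rational_denom_dvd:
  fixes p q n :: nat
  assumes q: "q > 0" and cop: "coprime p q" and qn: "q < 3 ^ n"
  shows "q dvd 3 ^ n * (3 ^ tperiod (real p / real q) - 1)"
proof -
  define P where "P = tperiod (real p / real q)"
  obtain N where per: "\<forall>i\<ge>N. tdigit (real p / real q) (i + P) = tdigit (real p / real q) i"
    using tperiod_props[OF q, of p] unfolding P_def by blast
  have "q dvd 3 ^ N * (3 ^ P - 1)"
    by (rule frac_eq_denom_dvd[OF q cop periodic_frac_eq[OF per]])
  hence "q dvd gcd (3 ^ N * (3 ^ P - 1)) (q * (3 ^ P - 1))" by simp
  also have "gcd (3 ^ N * (3 ^ P - 1)) (q * (3 ^ P - 1)) = gcd (3 ^ N) q * (3 ^ P - 1)"
    by (simp add: gcd_mult_right gcd.commute)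
  finally have d1: "q dvd gcd (3 ^ N) q * (3 ^ P - 1)" .
  have "gcd (3 ^ N) q dvd (3::nat) ^ N" by simp
  then obtain i where i: "i \<le> N" "gcd (3 ^ N) q = 3 ^ i"
    using divides_primepow_nat[of 3 "gcd (3 ^ N) q" N] by auto
  have "3 ^ i \<le> q" using gcd_le2_nat[of q "3 ^ N"] q i(2) by simp
  hence "(3::nat) ^ i < 3 ^ n" using qn by (rule le_less_trans)
  hence "i < n" by simp
  hence "i \<le> n" by simp
  hence "(3::nat) ^ i dvd 3 ^ n" by (simp add: le_imp_power_dvd)
  hence "gcd (3 ^ N) q * (3 ^ P - 1) dvd 3 ^ n * (3 ^ P - 1)" using i(2) by (simp add: mult_dvd_mono)
  with d1 show ?thesis unfolding P_def by (rule dvd_trans)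
qed


lemma cantor_prefix:
  assumes "x \<in> cantor_set"
  shows "\<exists>xs. length xs = n \<and> set xs \<subseteq> {0, 2::nat} \<and>
           (\<Sum>i<n. real (xs ! i) / 3 ^ Suc i) \<le> x \<and> x \<le> (\<Sum>i<n. real (xs ! i) / 3 ^ Suc i) + 1 / 3 ^ n"
proof -
  obtain a :: "nat \<Rightarrow> nat" where a: "\<forall>i. a i \<in> {0, 2}" and s: "(\<lambda>i. real (a i) / 3 ^ Suc i) sums x"
    using assms unfolding cantor_set_def by blast
  define f where "f i = real (a i) / 3 ^ Suc i" for i
  define xs where "xs = map a [0..<n]"
  have sxs: "(\<Sum>i<n. real (xs ! i) / 3 ^ Suc i) = sum f {..<n}"
    unfolding xs_def f_def by (intro sum.cong) auto
  have tail: "(\<lambda>i. f (i + n)) sums (x - sum f {..<n})"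
    using s unfolding f_def[symmetric] by (simp add: sums_iff_shift)
  have g: "(\<lambda>i. 2 / 3 ^ Suc (i + n)) sums (1 / 3 ^ n :: real)"
  proof -
    have "(\<lambda>i. (2 / 3 ^ Suc n) * (1/3) ^ i) sums ((2 / 3 ^ Suc n) * (1 / (1 - 1/3)) :: real)"
      by (intro sums_mult geometric_sums) simp
    moreover have "(\<lambda>i. (2 / 3 ^ Suc n) * (1/3) ^ i) = (\<lambda>i. 2 / 3 ^ Suc (i + n) :: real)"
      by (rule ext) (simp add: power_add field_simps)
    moreover have "(2 / 3 ^ Suc n) * (1 / (1 - 1/3)) = (1 / 3 ^ n :: real)"
      by (simp add: field_simps)
    ultimately show ?thesis by simp
  qed
  have z: "(\<lambda>i. 0 :: real) sums 0" by simp
  have lo: "0 \<le> x - sum f {..<n}"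
    by (rule sums_le[OF _ z tail]) (simp add: f_def)
  have hi: "x - sum f {..<n} \<le> 1 / 3 ^ n"
  proof (rule sums_le[OF _ tail g])
    fix i
    have "real (a (i + n)) \<le> 2" using a[rule_format, of "i + n"] by auto
    thus "f (i + n) \<le> 2 / 3 ^ Suc (i + n)" unfolding f_def by (simp add: divide_right_mono)
  qed
  have sx: "set xs \<subseteq> {0, 2}"
  proof
    fix y assume "y \<in> set xs"
    then obtain i where "y = a i" by (auto simp: xs_def)
    thus "y \<in> {0, 2}" using a by simp
  qed
  have lx: "length xs = n" by (simp add: xs_def)
  show ?thesis
    using lo hi sxs sx lx by (intro exI[of _ xs]) simp
qed

lemma card_S_fixed_q:
  "card {p. (p, q) \<in> S n} \<le> 2 ^ n"
proof (cases "{p. (p, q) \<in> S n} = {}")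
  case True thus ?thesis by simp
next
  case False
  then obtain p0 where "(p0, q) \<in> S n" by auto
  hence qn: "q < 3 ^ n" by (simp add: S_def)
  define A where "A = {p. (p, q) \<in> S n}"
  define pre where "pre p = (SOME xs. length xs = n \<and> set xs \<subseteq> {0, 2::nat} \<and>
           (\<Sum>i<n. real (xs ! i) / 3 ^ Suc i) \<le> real p / real q \<and>
           real p / real q \<le> (\<Sum>i<n. real (xs ! i) / 3 ^ Suc i) + 1 / 3 ^ n)" for p
  have pre: "length (pre p) = n \<and> set (pre p) \<subseteq> {0, 2::nat} \<and>
           (\<Sum>i<n. real (pre p ! i) / 3 ^ Suc i) \<le> real p / real q \<and>
           real p / real q \<le> (\<Sum>i<n. real (pre p ! i) / 3 ^ Suc i) + 1 / 3 ^ n" if "p \<in> A" for p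
  proof -
    have "real p / real q \<in> cantor_set" using that by (simp add: A_def S_def)
    from cantor_prefix[OF this, of n] show ?thesis unfolding pre_def by (rule someI_ex)
  qed
  have inj: "inj_on pre A"
  proof (rule inj_onI)
    fix p p' assume p: "p \<in> A" and p': "p' \<in> A" and eq: "pre p = pre p'"
    have q0: "q > 0"
    proof (rule ccontr)
      assume "\<not> q > 0"
      hence "q = 0" by simp
      thus False using p by (simp add: A_def S_def)
    qed
    define s where "s = (\<Sum>i<n. real (pre p ! i) / 3 ^ Suc i)"
    have b1: "s \<le> real p / real q" "real p / real q \<le> s + 1 / 3 ^ n"
      using pre[OF p] unfolding s_def by auto
    have b2: "s \<le> real p' / real q" "real p' / real q \<le> s + 1 / 3 ^ n"
      using pre[OF p'] unfolding s_def eq by auto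
    have "\<bar>real p / real q - real p' / real q\<bar> \<le> 1 / 3 ^ n" using b1 b2 by linarith
    moreover have "real p / real q - real p' / real q = (real p - real p') / real q"
      by (rule diff_divide_distrib[symmetric])
    ultimately have "\<bar>(real p - real p') / real q\<bar> \<le> 1 / 3 ^ n" by simp
    moreover have "\<bar>(real p - real p') / real q\<bar> = \<bar>real p - real p'\<bar> / real q"
      using q0 by simp
    ultimately have "\<bar>real p - real p'\<bar> / real q \<le> 1 / 3 ^ n" by simp
    hence "\<bar>real p - real p'\<bar> \<le> real q * (1 / 3 ^ n)" using q0 by (simp add: divide_le_eq mult.commute)
    also have "\<dots> < 1"
    proof -
      have "real q < real (3 ^ n)" using qn by (simp only: of_nat_less_iff)
      hence "real q < 3 ^ n" by simp
      thus ?thesis by (simp add: divide_less_eq)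
    qed
    finally show "p = p'" by linarith
  qed
  have "card A \<le> card {xs. set xs \<subseteq> {0, 2::nat} \<and> length xs = n}"
  proof (rule card_inj_on_le[OF inj])
    show "pre ` A \<subseteq> {xs. set xs \<subseteq> {0, 2::nat} \<and> length xs = n}" using pre by auto
    show "finite {xs. set xs \<subseteq> {0, 2::nat} \<and> length xs = n}" by (rule finite_lists_length_eq) simp
  qed
  also have "\<dots> = 2 ^ n" by (simp add: card_lists_length_eq numeral_2_eq_2)
  finally show ?thesis unfolding A_def .
qed


lemma S_q_pos: "(p, q) \<in> S n \<Longrightarrow> q > 0"
proof -
  assume "(p, q) \<in> S n"
  hence "3 ^ (n - 1) \<le> q" by (simp add: S_def)
  moreover have "(0::nat) < 3 ^ (n - 1)" by simp
  ultimately show "q > 0" by linarith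
qed

lemma S_p_le: "(p, q) \<in> S n \<Longrightarrow> p \<le> q"
proof -
  assume a: "(p, q) \<in> S n"
  hence q0: "q > 0" by (rule S_q_pos)
  have "real p / real q \<le> 1" using a by (simp add: S_def cantor_set_def)
  hence "real p \<le> real q" using q0 by (simp add: divide_le_eq)
  thus "p \<le> q" by simp
qed

lemma finite_S: "finite (S n)"
proof (rule finite_subset)
  show "S n \<subseteq> {..3 ^ n} \<times> {..3 ^ n}"
  proof
    fix z assume z: "z \<in> S n"
    obtain p q where pq: "z = (p, q)" by (cases z)
    have "p \<le> q" using z pq S_p_le by blast
    moreover have "q < 3 ^ n" using z pq by (simp add: S_def)
    ultimately show "z \<in> {..3 ^ n} \<times> {..3 ^ n}" using pq by simp
  qed
qed simp

lemma SK_denom: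
  assumes "(p, q) \<in> SK K n"
  shows "\<exists>P\<in>{1..nat \<lfloor>\<bar>K\<bar> * ln 3 * real n\<rfloor>}. q dvd 3 ^ n * (3 ^ P - 1)"
proof -
  have S: "(p, q) \<in> S n" and Pk: "real (tperiod (real p / real q)) \<le> K * ln (real q)"
    using assms by (auto simp: SK_def)
  have q0: "q > 0" using S by (rule S_q_pos)
  have cop: "coprime p q" and qn: "q < 3 ^ n" using S by (auto simp: S_def)
  define P where "P = tperiod (real p / real q)"
  have P0: "P > 0" using tperiod_props[OF q0, of p] unfolding P_def by blast
  have dv: "q dvd 3 ^ n * (3 ^ P - 1)" unfolding P_def by (rule rational_denom_dvd[OF q0 cop qn])
  have lq0: "ln (real q) \<ge> 0" using q0 by simp
  have "real q < real (3 ^ n)" using qn by (simp only: of_nat_less_iff)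
  hence "real q < 3 ^ n" by simp
  hence "ln (real q) < ln (3 ^ n)" using q0 by (simp add: ln_less_cancel_iff)
  also have "ln ((3::real) ^ n) = real n * ln 3" by (simp add: ln_realpow)
  finally have lqn: "ln (real q) < real n * ln 3" .
  have "real P \<le> K * ln (real q)" using Pk unfolding P_def .
  also have "\<dots> \<le> \<bar>K\<bar> * ln (real q)" using lq0 by (intro mult_right_mono) auto
  also have "\<dots> \<le> \<bar>K\<bar> * (real n * ln 3)" using lqn by (intro mult_left_mono) auto
  finally have "real P \<le> \<bar>K\<bar> * ln 3 * real n" by (simp add: mult_ac)
  hence "int P \<le> \<lfloor>\<bar>K\<bar> * ln 3 * real n\<rfloor>" by (simp add: le_floor_iff)
  hence "P \<le> nat \<lfloor>\<bar>K\<bar> * ln 3 * real n\<rfloor>" by linarith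
  thus ?thesis using P0 dv by auto
qed

lemma card_SK_le:
  fixes K :: real and n :: nat
  defines "M \<equiv> nat \<lfloor>\<bar>K\<bar> * ln 3 * real n\<rfloor>"
  shows "card (SK K n) \<le> (\<Sum>P\<in>{1..M}. card {d::nat. d dvd 3 ^ n * (3 ^ P - 1)}) * 2 ^ n"
proof -
  define Q where "Q = (\<Union>P\<in>{1..M}. {d::nat. d dvd 3 ^ n * (3 ^ P - 1)})"
  have finQ: "finite Q" unfolding Q_def
  proof (intro finite_UN_I)
    fix P assume "P \<in> {1..M}"
    hence "P \<ge> 1" by simp
    hence "(3::nat) ^ 1 \<le> 3 ^ P" by (intro power_increasing) auto
    hence "3 ^ n * (3 ^ P - 1) \<noteq> (0::nat)" by simp
    thus "finite {d::nat. d dvd 3 ^ n * (3 ^ P - 1)}" by simp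
  qed simp
  have finB: "finite {p. (p, q) \<in> S n}" for q
    by (rule finite_subset[of _ "{..q}"]) (auto dest: S_p_le)
  have sub: "SK K n \<subseteq> (\<lambda>(q, p). (p, q)) ` (SIGMA q:Q. {p. (p, q) \<in> S n})"
  proof
    fix z assume z: "z \<in> SK K n"
    obtain p q where pq: "z = (p, q)" by (cases z)
    have "(p, q) \<in> SK K n" using z pq by simp
    from SK_denom[OF this] have "q \<in> Q" unfolding Q_def M_def by auto
    moreover have "(p, q) \<in> S n" using z pq by (simp add: SK_def)
    ultimately show "z \<in> (\<lambda>(q, p). (p, q)) ` (SIGMA q:Q. {p. (p, q) \<in> S n})"
      using pq by (auto intro: image_eqI[of _ _ "(q, p)"])
  qed
  have finSig: "finite (SIGMA q:Q. {p. (p, q) \<in> S n})" using finQ finB by auto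
  have "card (SK K n) \<le> card ((\<lambda>(q, p). (p, q)) ` (SIGMA q:Q. {p. (p, q) \<in> S n}))"
    by (rule card_mono[OF finite_imageI[OF finSig] sub])
  also have "\<dots> \<le> card (SIGMA q:Q. {p. (p, q) \<in> S n})" by (rule card_image_le[OF finSig])
  also have "\<dots> = (\<Sum>q\<in>Q. card {p. (p, q) \<in> S n})" using finQ finB by simp
  also have "\<dots> \<le> (\<Sum>q\<in>Q. 2 ^ n)" by (intro sum_mono card_S_fixed_q)
  also have "\<dots> = card Q * 2 ^ n" by simp
  also have "card Q \<le> (\<Sum>P\<in>{1..M}. card {d::nat. d dvd 3 ^ n * (3 ^ P - 1)})"
    unfolding Q_def by (rule card_UN_le) simp
  hence "card Q * 2 ^ n \<le> (\<Sum>P\<in>{1..M}. card {d::nat. d dvd 3 ^ n * (3 ^ P - 1)}) * 2 ^ n"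
    by (rule mult_right_mono) simp
  finally show ?thesis .
qed


lemma SK_bound:
  fixes K \<epsilon> :: real
  assumes \<epsilon>: "\<epsilon> > 0"
  shows "\<exists>C. \<forall>n. real (card (SK K n)) \<le> C * 2 powr (real n * (1 + \<epsilon>))"
proof -
  define L where "L = \<bar>K\<bar> * ln 3"
  have L0: "L \<ge> 0" unfolding L_def by simp
  define \<delta> where "\<delta> = \<epsilon> * ln 2 / (2 * (1 + L) * ln 3)"
  have \<delta>0: "\<delta> > 0" unfolding \<delta>_def using \<epsilon> L0 by (intro divide_pos_pos mult_pos_pos) auto
  obtain C0 where C0: "C0 > 0" "\<forall>N>0. real (card {d. d dvd N}) \<le> C0 * real N powr \<delta>"
    using divisor_bound[OF \<delta>0] by blast
  define c2 where "c2 = 2 / (\<epsilon> * ln 2)"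
  have c20: "c2 > 0" unfolding c2_def using \<epsilon> by simp
  define C where "C = L * C0 * c2"
  show ?thesis
  proof (intro exI[of _ C] allI)
    fix n :: nat
    define M where "M = nat \<lfloor>\<bar>K\<bar> * ln 3 * real n\<rfloor>"
    define E where "E = (2::real) powr (\<epsilon> * real n / 2)"
    have E0: "E > 0" unfolding E_def by simp
    have hML: "real M \<le> L * real n"
    proof -
      have "\<bar>K\<bar> * ln 3 * real n \<ge> 0" by simp
      hence "real M \<le> \<bar>K\<bar> * ln 3 * real n" unfolding M_def by linarith
      thus ?thesis by (simp add: L_def)
    qed
    have exp3: "(3::real) powr ((1 + L) * real n * \<delta>) = E"
    proof -
      have hden: "2 * (1 + L) * ln 3 \<noteq> 0" using L0 by simp
      have dd: "\<delta> * (2 * (1 + L) * ln 3) = \<epsilon> * ln 2"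
        unfolding \<delta>_def using hden by simp
      have "(1 + L) * real n * \<delta> * ln 3 = real n / 2 * (\<delta> * (2 * (1 + L) * ln 3))"
        by (simp add: algebra_simps)
      also have "\<dots> = \<epsilon> * real n / 2 * ln 2" unfolding dd by (simp add: algebra_simps)
      finally have "(1 + L) * real n * \<delta> * ln 3 = \<epsilon> * real n / 2 * ln 2" .
      thus ?thesis unfolding E_def powr_def by simp
    qed
    have each: "real (card {d::nat. d dvd 3 ^ n * (3 ^ P - 1)}) \<le> C0 * E" if P: "P \<in> {1..M}" for P
    proof -
      define X :: nat where "X = 3 ^ n * (3 ^ P - 1)"
      have "(3::nat) ^ 1 \<le> 3 ^ P" using P by (intro power_increasing) auto
      hence X0: "X > 0" unfolding X_def by simp
      have "X \<le> 3 ^ n * 3 ^ P" unfolding X_def by simp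
      also have "(3::nat) ^ n * 3 ^ P \<le> 3 ^ n * 3 ^ M" using P by (intro mult_left_mono power_increasing) auto
      also have "(3::nat) ^ n * 3 ^ M = 3 ^ (n + M)" by (simp add: power_add)
      finally have "X \<le> 3 ^ (n + M)" .
      hence "real X \<le> real ((3::nat) ^ (n + M))" by (simp only: of_nat_le_iff)
      hence Xr: "real X \<le> 3 ^ (n + M)" by simp
      have c1: "real (card {d. d dvd X}) \<le> C0 * real X powr \<delta>" using C0(2) X0 by blast
      have c2: "real X powr \<delta> \<le> (3 ^ (n + M)) powr \<delta>"
        using Xr \<delta>0 by (intro powr_mono2) auto
      have c3: "((3::real) ^ (n + M)) powr \<delta> = 3 powr (real (n + M) * \<delta>)"
      proof -
        have "(3::real) ^ (n + M) = 3 powr real (n + M)" by (rule powr_realpow[symmetric]) simp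
        hence "((3::real) ^ (n + M)) powr \<delta> = (3 powr real (n + M)) powr \<delta>" by (simp only:)
        also have "\<dots> = 3 powr (real (n + M) * \<delta>)" by (rule powr_powr)
        finally show ?thesis .
      qed
      have c4: "(3::real) powr (real (n + M) * \<delta>) \<le> 3 powr ((1 + L) * real n * \<delta>)"
      proof (rule powr_mono)
        show "real (n + M) * \<delta> \<le> (1 + L) * real n * \<delta>"
          using hML \<delta>0 by (intro mult_right_mono) (auto simp: algebra_simps)
      qed simp
      have "real X powr \<delta> \<le> E" using c2 c3 c4 exp3 by linarith
      hence "C0 * real X powr \<delta> \<le> C0 * E" using C0(1) by (intro mult_left_mono) auto
      with c1 show ?thesis unfolding X_def by linarith
    qed
    have nE: "real n \<le> c2 * E"
    proof -
      have "E = exp (\<epsilon> * real n / 2 * ln 2)" unfolding E_def powr_def by simp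
      also have "\<dots> \<ge> 1 + \<epsilon> * real n / 2 * ln 2" by (rule exp_ge_add_one_self)
      finally have "\<epsilon> * ln 2 / 2 * real n \<le> E" by (simp add: algebra_simps)
      thus ?thesis unfolding c2_def using \<epsilon> by (simp add: field_simps)
    qed
    have "real (\<Sum>P\<in>{1..M}. card {d::nat. d dvd 3 ^ n * (3 ^ P - 1)}) \<le> (\<Sum>P\<in>{1..M}. C0 * E)"
      unfolding of_nat_sum by (intro sum_mono each)
    also have "\<dots> = real M * (C0 * E)" by simp
    also have "\<dots> \<le> (L * real n) * (C0 * E)" using hML C0 E0 by (intro mult_right_mono) auto
    also have "\<dots> \<le> (L * (c2 * E)) * (C0 * E)" using nE L0 C0 E0 by (intro mult_right_mono mult_left_mono) auto
    finally have sumb: "real (\<Sum>P\<in>{1..M}. card {d::nat. d dvd 3 ^ n * (3 ^ P - 1)}) \<le> C * (E * E)"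
      by (simp add: C_def mult_ac)
    have "card (SK K n) \<le> (\<Sum>P\<in>{1..M}. card {d::nat. d dvd 3 ^ n * (3 ^ P - 1)}) * 2 ^ n"
      unfolding M_def by (rule card_SK_le)
    hence "real (card (SK K n)) \<le> real ((\<Sum>P\<in>{1..M}. card {d::nat. d dvd 3 ^ n * (3 ^ P - 1)}) * 2 ^ n)"
      by (simp only: of_nat_le_iff)
    also have "\<dots> = real (\<Sum>P\<in>{1..M}. card {d::nat. d dvd 3 ^ n * (3 ^ P - 1)}) * 2 ^ n"
      by simp
    also have "\<dots> \<le> C * (E * E) * 2 ^ n" using sumb by (intro mult_right_mono) auto
    also have "E * E * 2 ^ n = 2 powr (real n * (1 + \<epsilon>))"
    proof -
      have h2: "(2::real) powr real n = 2 ^ n" by (rule powr_realpow) simp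
      have "E * E * 2 ^ n = 2 powr (\<epsilon> * real n / 2) * 2 powr (\<epsilon> * real n / 2) * 2 powr real n"
        unfolding E_def h2 ..
      also have "\<dots> = 2 powr (\<epsilon> * real n / 2 + \<epsilon> * real n / 2 + real n)"
        by (simp only: powr_add)
      finally have "E * E * 2 ^ n = 2 powr (\<epsilon> * real n / 2 + \<epsilon> * real n / 2 + real n)" .
      also have "\<epsilon> * real n / 2 + \<epsilon> * real n / 2 + real n = real n * (1 + \<epsilon>)"
        by (simp add: algebra_simps)
      finally show ?thesis .
    qed
    hence "C * (E * E) * 2 ^ n = C * 2 powr (real n * (1 + \<epsilon>))" by (simp add: mult.assoc)
    finally show "real (card (SK K n)) \<le> C * 2 powr (real n * (1 + \<epsilon>))" .
  qed
qed

theorem corollary5p3: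
  assumes "\<exists>K::real. \<forall>\<epsilon>1>0.
     (\<lambda>n. real (card (S n - SK K n))) \<in> O(\<lambda>n. 2 powr (real n * (1 + \<epsilon>1)))"
  shows "\<forall>\<epsilon>1>0. (\<lambda>n. real (card (S n))) \<in> O(\<lambda>n. 2 powr (real n * (1 + \<epsilon>1)))"
proof (intro allI impI)
  fix \<epsilon> :: real assume \<epsilon>: "\<epsilon> > 0"
  from assms obtain K :: real where hK: "\<forall>\<epsilon>1>0.
     (\<lambda>n. real (card (S n - SK K n))) \<in> O(\<lambda>n. 2 powr (real n * (1 + \<epsilon>1)))" by blast
  have big: "(\<lambda>n. real (card (S n - SK K n))) \<in> O(\<lambda>n. 2 powr (real n * (1 + \<epsilon>)))"
    using hK \<epsilon> by blast
  obtain c where c: "c > 0"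
    "eventually (\<lambda>n. norm (real (card (S n - SK K n))) \<le> c * norm (2 powr (real n * (1 + \<epsilon>)) :: real)) at_top"
    using landau_o.bigE[OF big] by blast
  obtain C where C: "\<forall>n. real (card (SK K n)) \<le> C * 2 powr (real n * (1 + \<epsilon>))"
    using SK_bound[OF \<epsilon>] by blast
  have cardS: "real (card (S n)) = real (card (S n - SK K n)) + real (card (SK K n))" for n
  proof -
    have sub: "SK K n \<subseteq> S n" by (auto simp: SK_def)
    have fin: "finite (SK K n)" by (rule finite_subset[OF sub finite_S])
    have "card (S n - SK K n) = card (S n) - card (SK K n)" by (rule card_Diff_subset[OF fin sub])
    moreover have "card (SK K n) \<le> card (S n)" by (rule card_mono[OF finite_S sub])
    ultimately have "card (S n) = card (S n - SK K n) + card (SK K n)" by simp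
    thus ?thesis by (simp only: of_nat_add[symmetric])
  qed
  show "(\<lambda>n. real (card (S n))) \<in> O(\<lambda>n. 2 powr (real n * (1 + \<epsilon>)))"
  proof (rule bigoI[where c = "c + C"])
    show "eventually (\<lambda>n. norm (real (card (S n))) \<le> (c + C) * norm (2 powr (real n * (1 + \<epsilon>)) :: real)) at_top"
      using c(2)
    proof eventually_elim
      case (elim n)
      define g where "g = (2::real) powr (real n * (1 + \<epsilon>))"
      have ng: "norm g = g" unfolding g_def by simp
      have a1: "real (card (S n - SK K n)) \<le> c * g" using elim ng unfolding g_def by simp
      have a2: "real (card (SK K n)) \<le> C * g" using C unfolding g_def by blast
      have "norm (real (card (S n))) = real (card (S n - SK K n)) + real (card (SK K n))"
        using cardS[of n] by simp
      also have "\<dots> \<le> c * g + C * g" using a1 a2 by linarith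
      also have "\<dots> = (c + C) * norm g" using ng by (simp add: algebra_simps)
      finally show ?case unfolding g_def .
    qed
  qed
qed

end
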